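(* Let $L = L_p + \varepsilon L_d \in \mathbb{DH}[t]$ be a line polynomial and $h \in \mathbb{R}[t]$ nonzero. Suppose there is a motion polynomial $C = P + \varepsilon D \in \mathbb{DH}[t]$ satisfying $$P\mathbf{k}\overline{P} = hL_p,\qquad -P\mathbf{k}\overline{D} - D\mathbf{k}\overline{P} = hL_d,\qquad P\overline{D} + D\overline{P} = 0,$$ and let $f \in \mathbb{R}[t]$ be a quadratic polynomial irreducible over $\mathbb{R}$ which divides $h/\gcd(\operatorname{rgcd}(L_p), h)$ and whose multiplicity as a factor of $h$ is one. Then there exists a motion polynomial $\tilde C = \tilde P + \varepsilon\tilde D$ satisfying the same three equations with $h$ replaced by $h/f$.
   Context: $\mathbb{H}$ denotes the real quaternions with units $\mathbf{i},\mathbf{j},\mathbf{k}$ and conjugation $\overline{p_0 + p_1\mathbf{i} + p_2\mathbf{j} + p_3\mathbf{k}} = p_0 - p_1\mathbf{i} - p_2\mathbf{j} - p_3\mathbf{k}$; $\mathbb{DH} = \mathbb{H} + \varepsilon\mathbb{H}$ with $\varepsilon^2=0$, $\varepsilon$ central. $\mathbb{H}[t]$, $\mathbb{DH}[t]$ are polynomial rings in a real indeterminate $t$ commuting with the coefficients; conjugation acts coefficientwise. A motion polynomial is $C = P + \varepsilon D \in \mathbb{DH}[t]$ with $P \ne 0$ and $P\overline{D} + D\overline{P} = 0$. A line polynomial is $L = L_p + \varepsilon L_d \in \mathbb{DH}[t]$ with $L_p, L_d$ vectorial (zero scalar part), $L_p\overline{L_d} + L_d\overline{L_p} = 0$, and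 $L_p \neq 0$. For $A \in \mathbb{H}[t]$, $\operatorname{rgcd}(A)$ is the monic gcd in $\mathbb{R}[t]$ of its four real coefficient polynomials. The three equations are equivalent to $C_\varepsilon\mathbf{k}\overline{C_\varepsilon} = hL$ (with $C_\varepsilon = P - \varepsilon D$) together with the Study condition. *)

theory Defs
  imports "HOL-Computational_Algebra.Computational_Algebra" "HOL-Computational_Algebra.Field_as_Ring"
begin

text \<open>Quaternions with coefficients in a commutative ring. With coefficients in
  real poly this is exactly H[t] (t commutes with the coefficients).
  Quat a b c d stands for a + b i + c j + d k.\<close>

datatype 'a quat = Quat (q0: 'a) (q1: 'a) (q2: 'a) (q3: 'a)

definition qadd :: "'a::comm_ring_1 quat \<Rightarrow> 'a quat \<Rightarrow> 'a quat" where
  "qadd p q = Quat (q0 p + q0 q) (q1 p + q1 q) (q2 p + q2 q) (q3 p + q3 q)"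

definition qneg :: "'a::comm_ring_1 quat \<Rightarrow> 'a quat" where
  "qneg p = Quat (- q0 p) (- q1 p) (- q2 p) (- q3 p)"

definition qmult :: "'a::comm_ring_1 quat \<Rightarrow> 'a quat \<Rightarrow> 'a quat" where
  "qmult p q = Quat
     (q0 p * q0 q - q1 p * q1 q - q2 p * q2 q - q3 p * q3 q)
     (q0 p * q1 q + q1 p * q0 q + q2 p * q3 q - q3 p * q2 q)
     (q0 p * q2 q - q1 p * q3 q + q2 p * q0 q + q3 p * q1 q)
     (q0 p * q3 q + q1 p * q2 q - q2 p * q1 q + q3 p * q0 q)"

definition qcnj :: "'a::comm_ring_1 quat \<Rightarrow> 'a quat" where
  "qcnj p = Quat (q0 p) (- q1 p) (- q2 p) (- q3 p)"

definition qscale :: "'a::comm_ring_1 \<Rightarrow> 'a quat \<Rightarrow> 'a quat" where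
  "qscale c p = Quat (c * q0 p) (c * q1 p) (c * q2 p) (c * q3 p)"

definition qzero :: "'a::comm_ring_1 quat" where
  "qzero = Quat 0 0 0 0"

definition qk :: "'a::comm_ring_1 quat" where
  "qk = Quat 0 0 0 1"

definition vectorial :: "'a::comm_ring_1 quat \<Rightarrow> bool" where
  "vectorial p \<longleftrightarrow> q0 p = 0"

text \<open>Motion polynomial C = P + eps D.\<close>
definition motion_poly :: "real poly quat \<Rightarrow> real poly quat \<Rightarrow> bool" where
  "motion_poly P D \<longleftrightarrow> P \<noteq> qzero \<and> qadd (qmult P (qcnj D)) (qmult D (qcnj P)) = qzero"

text \<open>Line polynomial L = Lp + eps Ld.\<close>
definition line_poly :: "real poly quat \<Rightarrow> real poly quat \<Rightarrow> bool" where
  "line_poly Lp Ld \<longleftrightarrow> vectorial Lp \<and> vectorial Ld \<and>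
     qadd (qmult Lp (qcnj Ld)) (qmult Ld (qcnj Lp)) = qzero \<and> Lp \<noteq> qzero"

text \<open>rgcd: monic gcd of the four real coefficient polynomials
  (gcd on real poly is normalized, i.e. monic).\<close>
definition rgcd :: "real poly quat \<Rightarrow> real poly" where
  "rgcd p = gcd (q0 p) (gcd (q1 p) (gcd (q2 p) (q3 p)))"

definition three_eqs :: "real poly quat \<Rightarrow> real poly quat \<Rightarrow> real poly \<Rightarrow>
    real poly quat \<Rightarrow> real poly quat \<Rightarrow> bool" where
  "three_eqs P D h Lp Ld \<longleftrightarrow>
     qmult (qmult P qk) (qcnj P) = qscale h Lp \<and>
     qadd (qneg (qmult (qmult P qk) (qcnj D))) (qneg (qmult (qmult D qk) (qcnj P))) = qscale h Ld \<and>
     qadd (qmult P (qcnj D)) (qmult D (qcnj P)) = qzero"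

end

theory Submission
  imports Defs "HOL-Library.Quadratic_Discriminant"
begin


lemma qmult_assoc: "qmult (qmult a b) c = qmult a (qmult b (c::'a::comm_ring_1 quat))"
  by (simp add: qmult_def algebra_simps)
lemma qcnj_qmult: "qcnj (qmult a b) = qmult (qcnj b) (qcnj (a::'a::comm_ring_1 quat))"
  by (simp add: qmult_def qcnj_def algebra_simps)
lemma qcnj_qcnj[simp]: "qcnj (qcnj (a::'a::comm_ring_1 quat)) = a"
  by (simp add: qcnj_def)
lemma qmult_qscale_l: "qmult (qscale c a) b = qscale c (qmult a (b::'a::comm_ring_1 quat))"
  by (simp add: qmult_def qscale_def algebra_simps)
lemma qmult_qscale_r: "qmult a (qscale c b) = qscale c (qmult a (b::'a::comm_ring_1 quat))"
  by (simp add: qmult_def qscale_def algebra_simps)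
lemma qcnj_qscale: "qcnj (qscale c a) = qscale c (qcnj (a::'a::comm_ring_1 quat))"
  by (simp add: qcnj_def qscale_def)
lemma qscale_qscale: "qscale c (qscale d a) = qscale (c*d) (a::'a::comm_ring_1 quat)"
  by (simp add: qscale_def algebra_simps)
lemma qmult_scalar: "qmult a (Quat l 0 0 0) = qscale l (a::'a::comm_ring_1 quat)"
  by (simp add: qmult_def qscale_def algebra_simps)
lemma qscale_qadd: "qscale c (qadd a b) = qadd (qscale c a) (qscale c (b::'a::comm_ring_1 quat))"
  by (simp add: qadd_def qscale_def algebra_simps)
lemma qscale_qneg: "qscale c (qneg a) = qneg (qscale c (a::'a::comm_ring_1 quat))"
  by (simp add: qneg_def qscale_def algebra_simps)
lemma qscale_qzero: "qscale c qzero = (qzero::'a::comm_ring_1 quat)"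
  by (simp add: qzero_def qscale_def)
lemma qscale_cancel: "(c::'a::idom) \<noteq> 0 \<Longrightarrow> qscale c a = qscale c b \<Longrightarrow> a = b"
  by (cases a; cases b) (simp add: qscale_def)

lemmas qs = qmult_qscale_l qmult_qscale_r qcnj_qscale qscale_qscale qcnj_qmult qmult_assoc
  qscale_qadd qscale_qneg qscale_qzero

lemma core:
  fixes P D Q P' D' Lp Ld :: "real poly quat" and f h lam :: "real poly"
  assumes QkQ: "qmult (qmult (qcnj Q) qk) Q = qscale f qk"
    and QQ: "qmult (qcnj Q) Q = Quat lam 0 0 0" and lam: "lam \<noteq> 0" and f: "f \<noteq> 0" and fh: "f dvd h"
    and Pnz: "P \<noteq> qzero" and three: "three_eqs P D h Lp Ld"
    and P': "qmult P (qcnj Q) = qscale f P'" and D': "qmult D (qcnj Q) = qscale f D'"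
  shows "motion_poly P' D' \<and> three_eqs P' D' (h div f) Lp Ld"
proof -
  obtain g where g: "h = f * g" using fh by blast
  have gd: "h div f = g" using g f by simp
  have e1: "qmult (qmult P qk) (qcnj P) = qscale h Lp"
   and e2: "qadd (qneg (qmult (qmult P qk) (qcnj D))) (qneg (qmult (qmult D qk) (qcnj P))) = qscale h Ld"
   and e3: "qadd (qmult P (qcnj D)) (qmult D (qcnj P)) = qzero" using three by (auto simp: three_eqs_def)
  have QkQ': "qmult (qcnj Q) (qmult qk (qmult Q X)) = qscale f (qmult qk X)" for X
    by (metis QkQ qmult_assoc qmult_qscale_l)
  have QQ': "qmult (qcnj Q) (qmult Q X) = qscale lam X" for X
  proof -
    have "qmult (qcnj Q) (qmult Q X) = qmult (Quat lam 0 0 0) X" by (metis QQ qmult_assoc)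
    also have "\<dots> = qscale lam X" by (simp add: qmult_def qscale_def)
    finally show ?thesis .
  qed
  have ff: "f * f \<noteq> 0" using f by simp
  have X1: "qmult (qmult (qmult P (qcnj Q)) qk) (qcnj (qmult P (qcnj Q))) = qscale (f*f) (qmult (qmult P' qk) (qcnj P'))"
    unfolding P' by (simp add: qs)
  have Y1: "qmult (qmult (qmult P (qcnj Q)) qk) (qcnj (qmult P (qcnj Q))) = qscale f (qmult (qmult P qk) (qcnj P))"
  proof -
    have "qmult (qmult (qmult P (qcnj Q)) qk) (qcnj (qmult P (qcnj Q))) = qmult P (qmult (qmult (qmult (qcnj Q) qk) Q) (qcnj P))"
      by (simp add: qs)
    also have "\<dots> = qscale f (qmult (qmult P qk) (qcnj P))" by (simp add: QkQ' qs)
    finally show ?thesis .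
  qed
  have E1: "qmult (qmult P' qk) (qcnj P') = qscale (h div f) Lp"
    by (rule qscale_cancel[OF ff]) (metis X1 Y1 e1 g gd qscale_qscale)
  have X2: "qadd (qneg (qmult (qmult (qmult P (qcnj Q)) qk) (qcnj (qmult D (qcnj Q))))) (qneg (qmult (qmult (qmult D (qcnj Q)) qk) (qcnj (qmult P (qcnj Q)))))
     = qscale (f*f) (qadd (qneg (qmult (qmult P' qk) (qcnj D'))) (qneg (qmult (qmult D' qk) (qcnj P'))))"
    unfolding P' D' by (simp add: qs)
  have Y2: "qadd (qneg (qmult (qmult (qmult P (qcnj Q)) qk) (qcnj (qmult D (qcnj Q))))) (qneg (qmult (qmult (qmult D (qcnj Q)) qk) (qcnj (qmult P (qcnj Q)))))
     = qscale f (qadd (qneg (qmult (qmult P qk) (qcnj D))) (qneg (qmult (qmult D qk) (qcnj P))))"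
  proof -
    have a: "qmult (qmult (qmult X (qcnj Q)) qk) (qcnj (qmult Y (qcnj Q))) = qscale f (qmult (qmult X qk) (qcnj Y))" for X Y :: "real poly quat"
    proof -
      have "qmult (qmult (qmult X (qcnj Q)) qk) (qcnj (qmult Y (qcnj Q))) = qmult X (qmult (qmult (qmult (qcnj Q) qk) Q) (qcnj Y))"
        by (simp add: qs)
      also have "\<dots> = qscale f (qmult (qmult X qk) (qcnj Y))" by (simp add: QkQ' qs)
      finally show ?thesis .
    qed
    show ?thesis by (simp add: a qscale_qadd qscale_qneg)
  qed
  have E2: "qadd (qneg (qmult (qmult P' qk) (qcnj D'))) (qneg (qmult (qmult D' qk) (qcnj P'))) = qscale (h div f) Ld"
    by (rule qscale_cancel[OF ff]) (metis X2 Y2 e2 g gd qscale_qscale)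
  have b: "qmult (qmult X (qcnj Q)) (qcnj (qmult Y (qcnj Q))) = qscale lam (qmult X (qcnj Y))" for X Y :: "real poly quat"
  proof -
    have "qmult (qmult X (qcnj Q)) (qcnj (qmult Y (qcnj Q))) = qmult X (qmult (qmult (qcnj Q) Q) (qcnj Y))"
      by (simp add: qs)
    also have "\<dots> = qscale lam (qmult X (qcnj Y))"
      by (simp add: QQ' qs)
    finally show ?thesis .
  qed
  have X3: "qadd (qmult (qmult P (qcnj Q)) (qcnj (qmult D (qcnj Q)))) (qmult (qmult D (qcnj Q)) (qcnj (qmult P (qcnj Q))))
      = qscale (f*f) (qadd (qmult P' (qcnj D')) (qmult D' (qcnj P')))"
    unfolding P' D' by (simp add: qs)
  have Y3: "qadd (qmult (qmult P (qcnj Q)) (qcnj (qmult D (qcnj Q)))) (qmult (qmult D (qcnj Q)) (qcnj (qmult P (qcnj Q))))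
      = qzero" by (simp add: b e3 qscale_qadd[symmetric] qscale_qzero)
  have E3: "qadd (qmult P' (qcnj D')) (qmult D' (qcnj P')) = qzero"
    by (rule qscale_cancel[OF ff]) (metis X3 Y3 qscale_qzero)
  have "P' \<noteq> qzero"
  proof
    assume "P' = qzero"
    then have "qmult P (qcnj Q) = qzero" using P' by (simp add: qscale_qzero)
    then have "qmult (qmult P (qcnj Q)) Q = qzero" by (simp add: qzero_def qmult_def)
    then have "qscale lam P = qzero" by (simp add: qmult_assoc QQ qmult_scalar)
    then show False using lam Pnz by (cases P) (simp add: qscale_def qzero_def)
  qed
  then show ?thesis using E1 E2 E3 by (simp add: motion_poly_def three_eqs_def)
qed


lemma cl1:
  fixes x :: "complex quat"
  assumes "qmult (qmult x qk) (qcnj x) = qzero"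
  shows "\<exists>s\<in>{1::complex,-1}. q3 x = - s*\<i>*q0 x \<and> q2 x = s*\<i>*q1 x"
proof -
  obtain p0 p1 p2 p3 where x: "x = Quat p0 p1 p2 p3" by (cases x)
  have E: "2*(p1*p3 + p0*p2) = 0" "p2*p3 - p0*p1 = 0" "p0*p0+p3*p3 = p1*p1+p2*p2"
    using assms unfolding x by (simp_all add: qmult_def qcnj_def qk_def qzero_def algebra_simps)
  have ii: "\<i>*\<i> = (-1::complex)" by simp
  define ap where "ap = p3 + \<i>*p0"
  define am where "am = p3 - \<i>*p0"
  define bp where "bp = p2 - \<i>*p1"
  define bm where "bm = p2 + \<i>*p1"
  have 1: "ap*bm = 0" unfolding ap_def bm_def using E ii by algebra
  have 2: "am*bp = 0" unfolding am_def bp_def using E ii by algebra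
  have 3: "ap*am = bp*bm" unfolding ap_def am_def bp_def bm_def using E ii by algebra
  have "(ap = 0 \<and> bp = 0) \<or> (am = 0 \<and> bm = 0)"
    using 1 2 3 by (metis mult_eq_0_iff)
  then show ?thesis
  proof
    assume "ap = 0 \<and> bp = 0"
    then have "q3 x = - 1*\<i>*q0 x \<and> q2 x = 1*\<i>*q1 x" unfolding x ap_def bp_def
      by (simp add: algebra_simps eq_neg_iff_add_eq_0)
    then show ?thesis by blast
  next
    assume "am = 0 \<and> bm = 0"
    then have "q3 x = - (-1)*\<i>*q0 x \<and> q2 x = (-1)*\<i>*q1 x" unfolding x am_def bm_def
      by (simp add: algebra_simps eq_neg_iff_add_eq_0)
    then show ?thesis by blast
  qed
qed

lemma dual_comp: "qadd (qneg (qmult (qmult (Quat p0 p1 p2 p3) qk) (qcnj (Quat d0 d1 d2 d3))))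
   (qneg (qmult (qmult (Quat d0 d1 d2 d3) qk) (qcnj (Quat p0 p1 p2 (p3::'a::comm_ring_1)))))
  = Quat 0 (-(2*(p3*d1 + p2*d0 + p1*d3 + p0*d2))) (-(2*(p3*d2 + p2*d3 - p1*d0 - p0*d1))) (-(2*(p3*d3 - p2*d2 - p1*d1 + p0*d0)))"
  by (simp add: qmult_def qcnj_def qadd_def qneg_def qk_def algebra_simps)

lemma cl2:
  fixes x y :: "complex quat" and s :: complex
  assumes s: "s \<in> {1,-1}" and r: "q3 x = - s*\<i>*q0 x" "q2 x = s*\<i>*q1 x" and nz: "x \<noteq> qzero"
    and st: "qadd (qmult x (qcnj y)) (qmult y (qcnj x)) = qzero"
    and du: "qadd (qneg (qmult (qmult x qk) (qcnj y))) (qneg (qmult (qmult y qk) (qcnj x))) = qzero"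
  shows "q3 y = - s*\<i>*q0 y \<and> q2 y = s*\<i>*q1 y"
proof -
  obtain p0 p1 p2 p3 where x: "x = Quat p0 p1 p2 p3" by (cases x)
  obtain d0 d1 d2 d3 where y: "y = Quat d0 d1 d2 d3" by (cases y)
  define \<sigma> where "\<sigma> = s*\<i>"
  have ss: "\<sigma>*\<sigma> = -1" using s unfolding \<sigma>_def by auto
  have p3: "p3 = - \<sigma>*p0" and p2: "p2 = \<sigma>*p1" using r unfolding x \<sigma>_def by auto
  have S: "2*(p0*d0 + p1*d1 + p2*d2 + p3*d3) = 0"
    using st unfolding x y by (simp add: qmult_def qcnj_def qadd_def qzero_def algebra_simps)
  have V1: "2*(p3*d1 + p2*d0 + p1*d3 + p0*d2) = 0" and V2: "2*(p3*d2 + p2*d3 - p1*d0 - p0*d1) = 0"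
   and V3: "2*(p3*d3 - p2*d2 - p1*d1 + p0*d0) = 0"
    using du unfolding x y dual_comp qzero_def quat.inject neg_equal_0_iff_equal by blast+
  note V = V1 V2 V3
  define g where "g = d3 + \<sigma>*d0"
  define d where "d = d2 - \<sigma>*d1"
  have a1: "p0*g = 0" unfolding g_def using S V p2 p3 ss by algebra
  have a2: "p1*g = 0" unfolding g_def using S V p2 p3 ss by algebra
  have a3: "p0*d = 0" unfolding d_def using S V p2 p3 ss by algebra
  have a4: "p1*d = 0" unfolding d_def using S V p2 p3 ss by algebra
  have "p0 \<noteq> 0 \<or> p1 \<noteq> 0" using nz p2 p3 unfolding x by (auto simp: qzero_def)
  then have "g = 0 \<and> d = 0" using a1 a2 a3 a4 by auto
  then show ?thesis unfolding y g_def d_def \<sigma>_def by (simp add: algebra_simps eq_neg_iff_add_eq_0)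
qed


definition ev :: "complex \<Rightarrow> real poly \<Rightarrow> complex" where
  "ev z g = poly (map_poly complex_of_real g) z"

lemma ev_mult[simp]: "ev z (p*q) = ev z p * ev z q"
proof -
  have "map_poly complex_of_real (p*q) = map_poly complex_of_real p * map_poly complex_of_real q"
    by (rule poly_eqI) (simp add: coeff_map_poly coeff_mult)
  thus ?thesis by (simp add: ev_def)
qed
lemma ev_add[simp]: "ev z (p+q) = ev z p + ev z q"
proof -
  have "map_poly complex_of_real (p+q) = map_poly complex_of_real p + map_poly complex_of_real q"
    by (rule poly_eqI) (simp add: coeff_map_poly)
  thus ?thesis by (simp add: ev_def)
qed
lemma ev_uminus[simp]: "ev z (-p) = - ev z p"
proof -
  have "map_poly complex_of_real (-p) = - map_poly complex_of_real p"
    by (rule poly_eqI) (simp add: coeff_map_poly)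
  thus ?thesis by (simp add: ev_def)
qed
lemma ev_diff[simp]: "ev z (p-q) = ev z p - ev z q"
  using ev_add[of z p "-q"] by simp
lemma ev_const[simp]: "ev z [:a:] = of_real a"
  by (simp add: ev_def map_poly_pCons)
lemma ev_0[simp]: "ev z 0 = 0" by (simp add: ev_def)
lemma ev_1[simp]: "ev z 1 = 1" by (simp add: ev_def)
lemma ev_lin: "ev z [:a, b:] = of_real a + of_real b * z"
  by (simp add: ev_def map_poly_pCons)

definition evq :: "complex \<Rightarrow> real poly quat \<Rightarrow> complex quat" where
  "evq z x = Quat (ev z (q0 x)) (ev z (q1 x)) (ev z (q2 x)) (ev z (q3 x))"

lemma evq_qmult: "evq z (qmult a b) = qmult (evq z a) (evq z b)"
  by (simp add: evq_def qmult_def)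
lemma evq_qcnj: "evq z (qcnj a) = qcnj (evq z a)"
  by (simp add: evq_def qcnj_def)
lemma evq_qadd: "evq z (qadd a b) = qadd (evq z a) (evq z b)"
  by (simp add: evq_def qadd_def)
lemma evq_qneg: "evq z (qneg a) = qneg (evq z a)"
  by (simp add: evq_def qneg_def)
lemma evq_qscale: "evq z (qscale c a) = qscale (ev z c) (evq z a)"
  by (simp add: evq_def qscale_def)
lemma evq_qk: "evq z qk = qk"
  by (simp add: evq_def qk_def)
lemma evq_qzero: "evq z qzero = qzero"
  by (simp add: evq_def qzero_def)
lemmas evqs = evq_qmult evq_qcnj evq_qadd evq_qneg evq_qscale evq_qk evq_qzero

lemma lin_poly: "degree (r::real poly) \<le> 1 \<Longrightarrow> r = [:coeff r 0, coeff r 1:]"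
  by (rule poly_eqI) (auto simp: coeff_pCons coeff_eq_0 split: nat.split)

lemma dvd_from_root:
  fixes f g :: "real poly" and p q :: real
  assumes df: "degree f = 2" and rt: "ev (Complex p q) f = 0" and q: "q \<noteq> 0"
    and g: "ev (Complex p q) g = 0"
  shows "f dvd g"
proof -
  let ?z = "Complex p q"
  have f0: "f \<noteq> 0" using df by auto
  define r where "r = g mod f"
  have "g = f * (g div f) + r" by (simp add: r_def)
  then have "ev ?z g = ev ?z f * ev ?z (g div f) + ev ?z r" by (metis ev_add ev_mult)
  then have er: "ev ?z r = 0" using rt g by simp
  have "r = 0 \<or> degree r < 2" using degree_mod_less[OF f0, of g] df by (simp add: r_def)
  then have "degree r \<le> 1" by auto
  then have rr: "r = [:coeff r 0, coeff r 1:]" by (rule lin_poly)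
  have "of_real (coeff r 0) + of_real (coeff r 1) * ?z = 0"
    using er rr ev_lin by metis
  then have "coeff r 0 + coeff r 1 * p = 0 \<and> coeff r 1 * q = 0"
    by (simp add: complex_eq_iff)
  then have "coeff r 0 = 0 \<and> coeff r 1 = 0" using q by auto
  then have "r = 0" using rr by simp
  then show ?thesis by (simp add: r_def mod_eq_0_iff_dvd)
qed

lemma quad_structure:
  fixes f :: "real poly"
  assumes df: "degree f = 2" and irr: "irreducible f"
  obtains p q where "q > 0" "f = smult (lead_coeff f) ([:-p,1:]*[:-p,1:] + [:q*q:])"
proof -
  define a where "a = coeff f 2"
  define b where "b = coeff f 1"
  define c where "c = coeff f 0"
  have a: "a \<noteq> 0" using df unfolding a_def by (metis leading_coeff_0_iff degree_0 zero_neq_numeral)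
  have fe: "f = [:c, b, a:]" unfolding a_def b_def c_def
    by (rule poly_eqI) (auto simp: coeff_pCons coeff_eq_0 df numeral_2_eq_2 split: nat.split)
  have noroot: "poly f x \<noteq> 0" for x
  proof
    assume "poly f x = 0"
    then have "[:-x,1:] dvd f" by (simp add: poly_eq_0_iff_dvd)
    then obtain k where k: "f = [:-x,1:] * k" by blast
    have "is_unit [:-x,1:] \<or> is_unit k" using irr k by (simp add: irreducible_def)
    moreover have "\<not> is_unit [:-x,1::real:]" by (simp add: is_unit_poly_iff)
    moreover have "k \<noteq> 0" using k df by auto
    then have dk: "degree f = 1 + degree k" unfolding k by (subst degree_mult_eq) simp_all
    then have "degree k = 1" using df by simp
    then have "\<not> is_unit k" by (auto simp: is_unit_poly_iff)
    ultimately show False by blast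
  qed
  have "discrim a b c < 0"
  proof (rule ccontr)
    assume "\<not> discrim a b c < 0"
    then obtain x where "a * x\<^sup>2 + b * x + c = 0" using discriminant_nonneg_ex[OF a] by force
    then have "poly f x = 0" unfolding fe by (simp add: algebra_simps power2_eq_square)
    then show False using noroot by blast
  qed
  then have dpos: "(4*a*c - b*b) / (4*a*a) > 0" using a
    by (intro divide_pos_pos) (auto simp: discrim_def power2_eq_square zero_less_mult_iff)
  define p where "p = - b / (2*a)"
  define q where "q = sqrt ((4*a*c - b*b) / (4*a*a))"
  have q: "q > 0" using dpos by (simp add: q_def)
  have qq: "q*q = (4*a*c - b*b) / (4*a*a)" by (metis abs_of_pos dpos q_def real_sqrt_mult_self)
  have "f = smult a ([:-p,1:]*[:-p,1:] + [:q*q:])"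
    unfolding fe qq p_def using a by (simp add: field_simps)
  moreover have "lead_coeff f = a" using df a_def by simp
  ultimately show ?thesis using that q by metis
qed


lemma ev_smult[simp]: "ev z (smult a p) = of_real a * ev z p"
proof -
  have "map_poly complex_of_real (smult a p) = smult (of_real a) (map_poly complex_of_real p)"
    by (rule poly_eqI) (simp add: coeff_map_poly)
  thus ?thesis by (simp add: ev_def)
qed

lemma killA:
  fixes x :: "complex quat" and s a :: complex
  assumes "q3 x = - s*\<i>*q0 x" "q2 x = s*\<i>*q1 x" "s \<in> {1,-1}"
  shows "qmult x (qcnj (Quat (a*\<i>) 0 0 (a*s))) = qzero"
  using assms by (cases x) (auto simp: qmult_def qcnj_def qzero_def algebra_simps)

lemma killB:
  fixes x :: "complex quat" and s a :: complex
  assumes "q3 x = - s*\<i>*q0 x" "q2 x = s*\<i>*q1 x" "s \<in> {1,-1}"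
  shows "qmult x (qcnj (Quat 0 (a*s) (a*\<i>) 0)) = qzero"
  using assms by (cases x) (auto simp: qmult_def qcnj_def qzero_def algebra_simps)

lemma factor_out:
  assumes "\<And>g. ev z g = 0 \<Longrightarrow> f dvd g" and "evq z X = qzero"
  shows "\<exists>X'. X = qscale f X'"
proof -
  have "f dvd q0 X" "f dvd q1 X" "f dvd q2 X" "f dvd q3 X"
    using assms(2) by (auto intro!: assms(1) simp: evq_def qzero_def)
  then show ?thesis
    by (intro exI[of _ "Quat (q0 X div f) (q1 X div f) (q2 X div f) (q3 X div f)"]) (cases X; simp add: qscale_def)
qed

lemma qscale_zero_left: "qscale 0 x = (qzero::'a::comm_ring_1 quat)"
  by (simp add: qscale_def qzero_def)

theorem lemma7:
  fixes Lp Ld P D :: "real poly quat" and h f :: "real poly"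
  assumes "line_poly Lp Ld"
    and "h \<noteq> 0"
    and "motion_poly P D"
    and "three_eqs P D h Lp Ld"
    and "degree f = 2" and "irreducible f"
    and "f dvd (h div gcd (rgcd Lp) h)"
    and "multiplicity f h = 1"
  shows "\<exists>P' D'. motion_poly P' D' \<and> three_eqs P' D' (h div f) Lp Ld"
proof -
  note hnz = assms(2) and df = assms(5) and irr = assms(6) and fG = assms(7) and mult = assms(8)
  have Pnz: "P \<noteq> qzero" using assms(3) by (simp add: motion_poly_def)
  have three: "three_eqs P D h Lp Ld" by fact
  have e1: "qmult (qmult P qk) (qcnj P) = qscale h Lp"
   and e2: "qadd (qneg (qmult (qmult P qk) (qcnj D))) (qneg (qmult (qmult D qk) (qcnj P))) = qscale h Ld"
   and e3: "qadd (qmult P (qcnj D)) (qmult D (qcnj P)) = qzero" using three by (auto simp: three_eqs_def)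
  have f0: "f \<noteq> 0" using df by auto
  obtain p q where q: "q > 0" and fs: "f = smult (lead_coeff f) ([:-p,1:]*[:-p,1:] + [:q*q:])"
    using quad_structure[OF df irr] by blast
  define c where "c = lead_coeff f"
  have c0: "c \<noteq> 0" using f0 by (simp add: c_def)
  define m where "m = [:-p,1:]*[:-p,1:] + [:q*q:]"
  have fcm: "f = smult c m" using fs by (simp add: c_def m_def)
  define z where "z = Complex p q"
  have evl: "ev z [:-p,1:] = \<i> * of_real q" by (simp add: ev_lin z_def complex_eq_iff)
  have "ev z m = ev z [:-p,1:] * ev z [:-p,1:] + of_real (q*q)"
    unfolding m_def by (simp only: ev_add ev_mult ev_const)
  then have evm: "ev z m = 0" unfolding evl by (simp add: algebra_simps)
  have evf: "ev z f = 0" by (simp add: fcm evm)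
  have DV: "f dvd g" if "ev z g = 0" for g
    using dvd_from_root[OF df _ _ that[unfolded z_def]] evf q unfolding z_def by simp
  have pf: "prime_elem f" using irr by (simp add: prime_elem_iff_irreducible)
  define G where "G = gcd (rgcd Lp) h"
  have hG: "h = G * (h div G)" by (simp add: G_def)
  have fh: "f dvd h" using fG hG unfolding G_def by (metis dvd_mult_right dvd_mult2 mult.commute dvd_def)
  obtain k where hk: "h = f * k" using fh by blast
  have nff: "\<not> f * f dvd h"
  proof
    assume "f * f dvd h"
    then have "f ^ 2 dvd h" by (simp add: power2_eq_square)
    moreover have "\<not> is_unit f" using irr by (simp add: irreducible_def)
    ultimately have "multiplicity f h \<ge> 2" using hnz by (intro multiplicity_geI) auto
    then show False using mult by simp
  qed
  have evh: "ev z h = 0" by (simp add: hk evf)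
  have PZ: "evq z P \<noteq> qzero"
  proof
    assume "evq z P = qzero"
    then obtain P1 where P1: "P = qscale f P1" using factor_out[where z=z and f=f, OF DV] by blast
    have "qscale (f*f) (qmult (qmult P1 qk) (qcnj P1)) = qscale (f*k) Lp"
      using e1 unfolding P1 hk by (simp add: qs)
    then have "qscale f (qscale f (qmult (qmult P1 qk) (qcnj P1))) = qscale f (qscale k Lp)"
      by (simp add: qscale_qscale)
    then have eq: "qscale f (qmult (qmult P1 qk) (qcnj P1)) = qscale k Lp"
      by (rule qscale_cancel[OF f0])
    have nfk: "\<not> f dvd k" using nff hk by auto
    have "f dvd k * q0 Lp" "f dvd k * q1 Lp" "f dvd k * q2 Lp" "f dvd k * q3 Lp"
      using arg_cong[OF eq, of q0] arg_cong[OF eq, of q1] arg_cong[OF eq, of q2] arg_cong[OF eq, of q3]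
      by (simp_all add: qscale_def) (metis dvd_triv_left)+
    then have "f dvd q0 Lp" "f dvd q1 Lp" "f dvd q2 Lp" "f dvd q3 Lp"
      using pf nfk by (simp_all add: prime_elem_dvd_mult_iff)
    then have "f dvd rgcd Lp" by (simp add: rgcd_def)
    then have "f dvd G" using fh by (simp add: G_def)
    then have "f * f dvd h" using hG fG by (metis G_def mult_dvd_mono)
    then show False using nff by simp
  qed
  have ee1: "qmult (qmult (evq z P) qk) (qcnj (evq z P)) = qzero"
    using arg_cong[OF e1, of "evq z"] by (simp add: evqs evh qscale_zero_left)
  obtain s where s: "s \<in> {1::complex,-1}" and rP: "q3 (evq z P) = - s*\<i>*q0 (evq z P)" "q2 (evq z P) = s*\<i>*q1 (evq z P)"
    using cl1[OF ee1] by blast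
  have ee3: "qadd (qmult (evq z P) (qcnj (evq z D))) (qmult (evq z D) (qcnj (evq z P))) = qzero"
    using arg_cong[OF e3, of "evq z"] by (simp add: evqs)
  have ee2: "qadd (qneg (qmult (qmult (evq z P) qk) (qcnj (evq z D)))) (qneg (qmult (qmult (evq z D) qk) (qcnj (evq z P)))) = qzero"
    using arg_cong[OF e2, of "evq z"] by (simp add: evqs evh qscale_zero_left)
  have rD: "q3 (evq z D) = - s*\<i>*q0 (evq z D)" "q2 (evq z D) = s*\<i>*q1 (evq z D)"
    using cl2[OF s rP PZ ee3 ee2] by auto
  obtain sr :: real where sr: "sr * sr = 1" and ssr: "s = of_real sr"
  proof -
    have "s = of_real 1 \<or> s = of_real (-1)" using s by auto
    then show ?thesis
    proof
      assume "s = of_real 1" then show ?thesis using that[of 1] by simp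
    next
      assume "s = of_real (-1)" then show ?thesis using that[of "-1"] by simp
    qed
  qed
  have key: "smult r [:-p,1:] * smult r [:-p,1:] + [:r*sr*q:] * [:r*sr*q:] = smult (r*r) m" for r
  proof -
    have "[:r*sr*q:] * [:r*sr*q:] = [:r*r*(q*q)*(sr*sr):]" by (simp add: algebra_simps)
    then show ?thesis unfolding m_def using sr by (simp add: algebra_simps smult_add_right)
  qed
  show ?thesis
  proof (cases "c > 0")
    case True
    define r where "r = sqrt c"
    have rr: "r * r = c" using True by (simp add: r_def)
    define A where "A = smult r [:-p,1:]"
    have evA: "ev z A = of_real r * (\<i> * of_real q)" unfolding A_def by (simp only: ev_smult evl)
    define Q where "Q = Quat A 0 0 [:r*sr*q:]"
    have eQ: "evq z Q = Quat ((of_real r * of_real q) * \<i>) 0 0 ((of_real r * of_real q) * s)"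
      by (simp add: Q_def evq_def evA ssr algebra_simps)
    have "evq z (qmult P (qcnj Q)) = qzero" by (simp add: evqs eQ killA[OF rP s])
    then obtain P' where P': "qmult P (qcnj Q) = qscale f P'"
      using factor_out[where z=z and f=f, OF DV] by blast
    have "evq z (qmult D (qcnj Q)) = qzero" by (simp add: evqs eQ killA[OF rD s])
    then obtain D' where D': "qmult D (qcnj Q) = qscale f D'"
      using factor_out[where z=z and f=f, OF DV] by blast
    have QkQ: "qmult (qmult (qcnj Q) qk) Q = qscale f qk"
      using key[of r] by (simp add: A_def Q_def qmult_def qcnj_def qk_def qscale_def fcm rr algebra_simps)
    have QQ: "qmult (qcnj Q) Q = Quat f 0 0 0"
      using key[of r] by (simp add: A_def Q_def qmult_def qcnj_def fcm rr algebra_simps)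
    show ?thesis using core[OF QkQ QQ f0 f0 fh Pnz three P' D'] by blast
  next
    case False
    then have cn: "c < 0" using c0 by simp
    define r where "r = sqrt (-c)"
    have rr: "r * r = -c" using cn by (simp add: r_def)
    define A where "A = smult r [:-p,1:]"
    have evA: "ev z A = of_real r * (\<i> * of_real q)" unfolding A_def by (simp only: ev_smult evl)
    define Q where "Q = Quat 0 [:r*sr*q:] A 0"
    have eQ: "evq z Q = Quat 0 ((of_real r * of_real q) * s) ((of_real r * of_real q) * \<i>) 0"
      by (simp add: Q_def evq_def evA ssr algebra_simps)
    have "evq z (qmult P (qcnj Q)) = qzero" by (simp add: evqs eQ killB[OF rP s])
    then obtain P' where P': "qmult P (qcnj Q) = qscale f P'"
      using factor_out[where z=z and f=f, OF DV] by blast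
    have "evq z (qmult D (qcnj Q)) = qzero" by (simp add: evqs eQ killB[OF rD s])
    then obtain D' where D': "qmult D (qcnj Q) = qscale f D'"
      using factor_out[where z=z and f=f, OF DV] by blast
    have QkQ: "qmult (qmult (qcnj Q) qk) Q = qscale f qk"
    proof -
      have sq: "A*A + [:r*sr*q:]*[:r*sr*q:] = -f" unfolding A_def key rr fcm by simp
      show ?thesis unfolding Q_def using sq
        by (simp add: qmult_def qcnj_def qk_def qscale_def algebra_simps)
    qed
    have QQ: "qmult (qcnj Q) Q = Quat (-f) 0 0 0"
    proof -
      have sq: "A*A + [:r*sr*q:]*[:r*sr*q:] = -f" unfolding A_def key rr fcm by simp
      show ?thesis unfolding Q_def using sq
        by (simp add: qmult_def qcnj_def algebra_simps)
    qed
    have mf: "-f \<noteq> 0" using f0 by simp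
    show ?thesis using core[OF QkQ QQ mf f0 fh Pnz three P' D'] by blast
  qed
qed


end
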